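(* Let $\overline{H}_n = \sum_{j=1}^n \frac{(-1)^{j-1}}{j}$ denote the $n$th skew-harmonic number and let $\operatorname{Ein}(z) = \int_0^z \frac{1 - e^{-t}}{t}\,dt$ denote the complementary exponential integral. For all real $y$, $$\sum_{n = 1}^\infty \overline{H}_n\left(e^y - 1 - \frac{y}{1!} - \frac{y^2}{2!} - \ldots - \frac{y^n}{n!}\right) = y e^y\left[\operatorname{Ein}(2y) - \operatorname{Ein}(y)\right] - \cosh (y) +1.$$ *)

theory Defs
  imports "HOL-Analysis.Analysis"
begin

definition skew_harmonic :: "nat \<Rightarrow> real" where
  "skew_harmonic n = (\<Sum>j=1..n. (-1) ^ (j - 1) / real j)"

text \<open>The integrand is extended by its limit 1 at t = 0 (irrelevant for the integral).\<close>
definition Ein_integrand :: "real \<Rightarrow> real" where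
  "Ein_integrand t = (if t = 0 then 1 else (1 - exp (- t)) / t)"

definition Ein :: "real \<Rightarrow> real" where
  "Ein z = (if 0 \<le> z then integral {0..z} Ein_integrand
            else - integral {z..0} Ein_integrand)"

end

theory Submission
  imports Defs
begin

lemma Ein_integrand_cont: "isCont Ein_integrand t"
proof (cases "t = 0")
  case True
  have d: "((\<lambda>t::real. 1 - exp (- t)) has_field_derivative 1) (at 0)"
    by (auto intro!: derivative_eq_intros)
  have "((\<lambda>t::real. ((1 - exp (- t)) - (1 - exp (- 0))) / (t - 0)) \<longlongrightarrow> 1) (at 0)"
    using d unfolding has_field_derivative_iff by simp
  then have "((\<lambda>t::real. (1 - exp (- t)) / t) \<longlongrightarrow> 1) (at 0)" by simp
  then have "(Ein_integrand \<longlongrightarrow> 1) (at 0)"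
  proof (rule Lim_transform_eventually)
    show "\<forall>\<^sub>F x in at 0. (1 - exp (- x)) / x = Ein_integrand x"
        unfolding eventually_at_filter by (rule always_eventually) (simp add: Ein_integrand_def)
  qed
  moreover have "Ein_integrand 0 = 1" by (simp add: Ein_integrand_def)
  ultimately show ?thesis using True by (simp add: isCont_def)
next
  case False
  have "isCont (\<lambda>t. (1 - exp (- t)) / t) t" using False by (auto intro!: continuous_intros)
  moreover have "\<forall>\<^sub>F s in nhds t. (1 - exp (- s)) / s = Ein_integrand s"
  proof -
    have "\<forall>\<^sub>F s in nhds t. s \<in> -{0}" using eventually_nhds_in_open[of "-{0}" t] False by auto
    then show ?thesis by (rule eventually_mono) (simp add: Ein_integrand_def)
  qed
  ultimately show ?thesis using isCont_cong[of "\<lambda>s. (1 - exp (- s)) / s" Ein_integrand t] by blast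
qed

lemma Ein_integrand_cont_on: "continuous_on S Ein_integrand"
  by (simp add: Ein_integrand_cont continuous_at_imp_continuous_on)

lemma Ein_alt: "a \<le> z \<Longrightarrow> a \<le> 0 \<Longrightarrow> Ein z = integral {a..z} Ein_integrand - integral {a..0} Ein_integrand"
proof -
  assume az: "a \<le> z" and a0: "a \<le> 0"
  have int: "\<And>u v. Ein_integrand integrable_on {u..v}"
    by (simp add: Ein_integrand_cont_on integrable_continuous_real)
  show ?thesis
  proof (cases "0 \<le> z")
    case True
    have "integral {a..0} Ein_integrand + integral {0..z} Ein_integrand = integral {a..z} Ein_integrand"
      using Henstock_Kurzweil_Integration.integral_combine[of a 0 z Ein_integrand] int a0 True by simp
    then show ?thesis using True by (simp add: Ein_def)
  next
    case False
    have "integral {a..z} Ein_integrand + integral {z..0} Ein_integrand = integral {a..0} Ein_integrand"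
      using Henstock_Kurzweil_Integration.integral_combine[of a z 0 Ein_integrand] int az False by simp
    then show ?thesis using False by (simp add: Ein_def)
  qed
qed

lemma Ein_deriv: "(Ein has_real_derivative Ein_integrand z) (at z)"
proof -
  define a where "a = - \<bar>z\<bar> - 1"
  define b where "b = \<bar>z\<bar> + 1"
  have "((\<lambda>x. integral {a..x} Ein_integrand - integral {a..0} Ein_integrand) has_real_derivative Ein_integrand z) (at z within {a..b})"
  proof -
    have "z \<in> {a..b}" by (auto simp: a_def b_def)
    from integral_has_real_derivative[OF Ein_integrand_cont_on this]
    show ?thesis by (auto intro!: derivative_eq_intros)
  qed
  then have "((\<lambda>x. integral {a..x} Ein_integrand - integral {a..0} Ein_integrand) has_real_derivative Ein_integrand z) (at z)"
    by (subst (asm) at_within_interior) (auto simp: a_def b_def)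
  then show ?thesis
    by (rule has_field_derivative_transform_within_open[where S="{a<..<b}"]) (auto simp: a_def b_def intro!: Ein_alt[symmetric])
qed


definition Tp :: "nat \<Rightarrow> real \<Rightarrow> real" where "Tp n u = (\<Sum>k<n. u ^ k / fact k)"

lemma Tp_Suc: "Tp (Suc n) u = Tp n u + u ^ n / fact n"
  by (simp add: Tp_def)

lemma Tp_bound: "\<bar>u\<bar> \<le> c \<Longrightarrow> \<bar>exp u - Tp n u\<bar> \<le> exp c * c ^ n / fact n"
proof -
  assume uc: "\<bar>u\<bar> \<le> c"
  obtain t where t: "\<bar>t\<bar> \<le> \<bar>u\<bar>" "exp u = Tp n u + (exp t / fact n) * u ^ n"
    using Maclaurin_exp_le[of u n] unfolding Tp_def by blast
  have "\<bar>exp u - Tp n u\<bar> = exp t * \<bar>u\<bar> ^ n / fact n" using t(2) by (simp add: abs_mult power_abs)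
  also have "\<dots> \<le> exp c * c ^ n / fact n"
    using t(1) uc by (intro divide_right_mono mult_mono power_mono) auto
  finally show ?thesis .
qed

definition hh :: "nat \<Rightarrow> real \<Rightarrow> real" where "hh m x = (\<Sum>j<m. (- x) ^ j)"

lemma hh_Suc: "hh (Suc m) x = hh m x + (- x) ^ m"
  by (simp add: hh_def)

lemma hh_geom: "(1 + x) * hh m x = 1 - (- x) ^ m"
proof (induction m)
  case 0
  then show ?case by (simp add: hh_def)
next
  case (Suc m)
  have "(1 + x) * hh (Suc m) x = (1 + x) * hh m x + (1 + x) * (- x) ^ m"
    by (simp add: hh_Suc distrib_left)
  also have "\<dots> = 1 - (- x) ^ m + (1 + x) * (- x) ^ m" using Suc by simp
  also have "\<dots> = 1 - (- x) ^ Suc m" by (simp add: algebra_simps)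
  finally show ?case .
qed

lemma skew_Suc: "skew_harmonic (Suc m) = skew_harmonic m + (-1) ^ m / real (Suc m)"
  by (simp add: skew_harmonic_def)

lemma skew_alt: "skew_harmonic m = (\<Sum>j<m. (-1) ^ j / real (Suc j))"
proof (induction m)
  case 0
  then show ?case by (simp add: skew_harmonic_def)
next
  case (Suc m)
  then show ?case by (simp only: skew_Suc sum.lessThan_Suc)
qed

lemma pow_integral: "((\<lambda>x::real. x ^ j) has_integral 1 / real (Suc j)) {0..1}"
proof -
  have d: "\<And>x. ((\<lambda>x::real. x ^ Suc j / real (Suc j)) has_vector_derivative x ^ j) (at x within {0..1})"
  proof -
    fix x :: real
    have "((\<lambda>x::real. x ^ Suc j) has_real_derivative (real (Suc j) * x ^ j)) (at x)"
      using DERIV_pow[of "Suc j" x] by simp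
    then have "((\<lambda>x::real. x ^ Suc j / real (Suc j)) has_real_derivative (real (Suc j) * x ^ j / real (Suc j))) (at x)"
      by (rule DERIV_cdivide)
    then have "((\<lambda>x::real. x ^ Suc j / real (Suc j)) has_real_derivative x ^ j) (at x within {0..1})"
      by (simp add: has_field_derivative_at_within del: of_nat_Suc)
    then show "((\<lambda>x. x ^ Suc j / real (Suc j)) has_vector_derivative x ^ j) (at x within {0..1})"
      by (simp add: has_real_derivative_iff_has_vector_derivative[symmetric] del: of_nat_Suc)
  qed
  have "((\<lambda>x::real. x ^ j) has_integral ((1::real) ^ Suc j / real (Suc j) - 0 ^ Suc j / real (Suc j))) {0..1}"
    by (rule fundamental_theorem_of_calculus[OF _ d]) simp
  then show ?thesis by (simp del: of_nat_Suc)
qed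

lemma hh_integral: "(hh m has_integral skew_harmonic m) {0..1}"
proof -
  have "((\<lambda>x. \<Sum>j<m. (-1) ^ j * x ^ j) has_integral (\<Sum>j<m. (-1) ^ j * (1 / real (Suc j)))) {0..1}"
    by (rule has_integral_sum[OF finite_lessThan], rule has_integral_mult_right[OF pow_integral])
  moreover have "hh m = (\<lambda>x. \<Sum>j<m. (-1) ^ j * x ^ j)"
    unfolding hh_def by (intro ext sum.cong refl) (rule power_minus)
  moreover have "(\<Sum>j<m. (-1) ^ j * (1 / real (Suc j))) = skew_harmonic m"
    unfolding skew_alt by (intro sum.cong refl) (simp only: times_divide_eq_right mult_1_right)
  ultimately show ?thesis by simp
qed

lemma fin_id_step_alg:
  fixes x e R a p T U m :: real
  shows "(1 + x) * (m * R + T) - e + U + p * R + (1 + x) * (R - a) * (1 - p)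
       = (1 + x) * ((1 + m) * (R - a) + (T + m * a)) - e + (U + p * a) + (- x * p) * (R - a)"
  by (simp add: algebra_simps)

lemma fin_id:
  fixes x y :: real
  shows "(1 + x) * (\<Sum>n\<le>M. (exp y - Tp (Suc n) y) * (1 - (- x) ^ n))
    = (1 + x) * (real (Suc M) * (exp y - Tp (Suc M) y) + y * Tp M y) - exp y
      + Tp (Suc M) (- (x * y)) + (- x) ^ (Suc M) * (exp y - Tp (Suc M) y)"
proof (induction M)
  case 0
  then show ?case by (simp add: Tp_def algebra_simps)
next
  case (Suc M)
  define a where "a = y ^ Suc M / fact (Suc M)"
  define p where "p = (- x) ^ Suc M"
  have R': "exp y - Tp (Suc (Suc M)) y = (exp y - Tp (Suc M) y) - a"
    by (simp add: Tp_Suc[of "Suc M" y] a_def)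
  have U': "Tp (Suc (Suc M)) (- (x * y)) = Tp (Suc M) (- (x * y)) + p * a"
  proof -
    have "(- (x * y)) ^ Suc M = p * y ^ Suc M" unfolding p_def
      by (metis mult_minus_left power_mult_distrib)
    then show ?thesis by (simp add: Tp_Suc[of "Suc M"] a_def)
  qed
  have T': "y * Tp (Suc M) y = y * Tp M y + real (Suc M) * a"
  proof -
    have "real (Suc M) * a = y * (y ^ M / fact M)"
      unfolding a_def by (simp add: field_simps del: of_nat_Suc)
    then show ?thesis by (simp add: Tp_Suc distrib_left)
  qed
  have p': "(- x) ^ Suc (Suc M) = - x * p" by (simp add: p_def)
  have "(1 + x) * (\<Sum>n\<le>Suc M. (exp y - Tp (Suc n) y) * (1 - (- x) ^ n))
      = (1 + x) * (\<Sum>n\<le>M. (exp y - Tp (Suc n) y) * (1 - (- x) ^ n))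
        + (1 + x) * (exp y - Tp (Suc (Suc M)) y) * (1 - p)"
    by (simp add: p_def distrib_left)
  also have "\<dots> = (1 + x) * (real (Suc M) * (exp y - Tp (Suc M) y) + y * Tp M y) - exp y
      + Tp (Suc M) (- (x * y)) + p * (exp y - Tp (Suc M) y)
        + (1 + x) * ((exp y - Tp (Suc M) y) - a) * (1 - p)"
    using Suc.IH R' by (simp add: p_def)
  also have "\<dots> = (1 + x) * ((1 + real (Suc M)) * ((exp y - Tp (Suc M) y) - a) + (y * Tp M y + real (Suc M) * a)) - exp y
      + (Tp (Suc M) (- (x * y)) + p * a) + (- x * p) * ((exp y - Tp (Suc M) y) - a)"
    by (rule fin_id_step_alg)
  also have "\<dots> = (1 + x) * (real (Suc (Suc M)) * (exp y - Tp (Suc (Suc M)) y) + y * Tp (Suc M) y) - exp y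
      + Tp (Suc (Suc M)) (- (x * y)) + (- x) ^ (Suc (Suc M)) * (exp y - Tp (Suc (Suc M)) y)"
    by (simp only: R' U' T' p' of_nat_Suc)
  finally show ?case .
qed

lemma Ein_chain[derivative_intros]:
  "(g has_real_derivative g') (at x within S) \<Longrightarrow>
   ((\<lambda>x. Ein (g x)) has_real_derivative Ein_integrand (g x) * g') (at x within S)"
  by (rule DERIV_chain2[OF Ein_deriv])

definition ff :: "real \<Rightarrow> real \<Rightarrow> real" where
  "ff y x = y * exp y / (1 + x) - (exp y - exp (- (x * y))) / (1 + x) ^ 2"

definition GG :: "real \<Rightarrow> real \<Rightarrow> real" where
  "GG y x = exp y / (1 + x) - exp (- (x * y)) / (1 + x) + y * exp y * Ein (y * (1 + x))"

lemma GG_deriv: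
  assumes "0 \<le> x"
  shows "(GG y has_real_derivative ff y x) (at x within {0..1})"
proof -
  have x1: "1 + x \<noteq> 0" using assms by simp
  have d1: "((\<lambda>x. exp y / (1 + x)) has_real_derivative (- exp y / (1 + x) ^ 2)) (at x within {0..1})"
    using x1 by (auto intro!: derivative_eq_intros simp: power2_eq_square)
  have d2: "((\<lambda>x. exp (- (x * y)) / (1 + x)) has_real_derivative
      ((- y * exp (- (x * y))) * (1 + x) - exp (- (x * y))) / (1 + x) ^ 2) (at x within {0..1})"
    using x1 by (auto intro!: derivative_eq_intros simp: power2_eq_square)
  have d3: "((\<lambda>x. y * exp y * Ein (y * (1 + x))) has_real_derivative
      y * exp y * (Ein_integrand (y * (1 + x)) * y)) (at x within {0..1})"
    by (auto intro!: derivative_eq_intros)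
  have "(GG y has_real_derivative (- exp y / (1 + x) ^ 2) - ((- y * exp (- (x * y))) * (1 + x) - exp (- (x * y))) / (1 + x) ^ 2
      + y * exp y * (Ein_integrand (y * (1 + x)) * y)) (at x within {0..1})"
    unfolding GG_def by (intro DERIV_add DERIV_diff d1 d2 d3)
  moreover have "(- exp y / (1 + x) ^ 2) - ((- y * exp (- (x * y))) * (1 + x) - exp (- (x * y))) / (1 + x) ^ 2
      + y * exp y * (Ein_integrand (y * (1 + x)) * y) = ff y x"
  proof -
    have ein: "y * exp y * (Ein_integrand (y * (1 + x)) * y) = y * exp y / (1 + x) - y * exp (- (x * y)) / (1 + x)"
    proof (cases "y = 0")
      case True
      then show ?thesis by simp
    next
      case False
      then have nz: "y * (1 + x) \<noteq> 0" using x1 by simp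
      have e: "exp (- (y * (1 + x))) = exp (- y) * exp (- (x * y))"
        by (simp add: exp_add[symmetric] algebra_simps)
      have e2: "exp y * exp (- y) = 1" by (simp add: exp_minus)
      have "y * exp y * (Ein_integrand (y * (1 + x)) * y) = y * exp y * ((1 - exp (- y) * exp (- (x * y))) / (y * (1 + x)) * y)"
        using nz e by (simp add: Ein_integrand_def)
      also have "\<dots> = y * (exp y - (exp y * exp (- y)) * exp (- (x * y))) / (1 + x)"
      proof -
        have "y + x * y \<noteq> 0" using nz by (simp add: algebra_simps)
        then show ?thesis using False x1 by (simp add: field_simps)
      qed
      also have "\<dots> = y * exp y / (1 + x) - y * exp (- (x * y)) / (1 + x)"
        by (simp add: e2 right_diff_distrib diff_divide_distrib)
      finally show ?thesis .
    qed
    have x2: "(1 + x) ^ 2 \<noteq> 0" using x1 by simp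
    have sp: "(- y * exp (- (x * y))) * (1 + x) / (1 + x) ^ 2 = y * exp (- (x * y)) / (1 + x) * (-1)"
      using x1 by (simp add: power2_eq_square)
    show ?thesis unfolding ein ff_def diff_divide_distrib sp by (simp add: algebra_simps)
  qed
  ultimately show ?thesis by simp
qed

lemma ff_integral: "(ff y has_integral (y * exp y * (Ein (2 * y) - Ein y) - cosh y + 1)) {0..1}"
proof -
  have "(ff y has_integral (GG y 1 - GG y 0)) {0..1}"
    by (rule fundamental_theorem_of_calculus)
       (auto simp: has_real_derivative_iff_has_vector_derivative[symmetric] intro!: GG_deriv)
  moreover have "GG y 1 - GG y 0 = y * exp y * (Ein (2 * y) - Ein y) - cosh y + 1"
  proof -
    have "Ein (y * 2) = Ein (2 * y)" by (simp add: mult.commute)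
    then show ?thesis by (simp add: GG_def cosh_def right_diff_distrib add_divide_distrib)
  qed
  ultimately show ?thesis by simp
qed

definition gN :: "real \<Rightarrow> nat \<Rightarrow> real \<Rightarrow> real" where
  "gN y N x = (\<Sum>n<N. (exp y - Tp (Suc (Suc n)) y) * hh (Suc n) x)"

definition cc :: "real \<Rightarrow> nat \<Rightarrow> real" where "cc y n = \<bar>y\<bar> ^ n / fact n"

definition eps :: "real \<Rightarrow> nat \<Rightarrow> real" where
  "eps y N = 4 * exp \<bar>y\<bar> * \<bar>y\<bar> * cc y N + 2 * exp \<bar>y\<bar> * cc y (Suc N)"

lemma cc_Suc: "real (Suc N) * cc y (Suc N) = \<bar>y\<bar> * cc y N"
  unfolding cc_def by (simp add: field_simps del: of_nat_Suc)

lemma gN_bound: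
  assumes x: "0 \<le> x" "x \<le> 1"
  shows "\<bar>gN y N x - ff y x\<bar> \<le> eps y N"
proof -
  define A where "A = exp \<bar>y\<bar>"
  define R where "R = exp y - Tp (Suc N) y"
  have x1: "1 + x \<noteq> 0" "1 \<le> 1 + x" "1 + x \<le> 2" using x by auto
  have sum1: "(1 + x) * gN y N x = (\<Sum>n\<le>N. (exp y - Tp (Suc n) y) * (1 - (- x) ^ n))"
  proof -
    have "(1 + x) * gN y N x = (\<Sum>n<N. (exp y - Tp (Suc (Suc n)) y) * (1 - (- x) ^ (Suc n)))"
      unfolding gN_def sum_distrib_left
      by (intro sum.cong refl) (metis hh_geom mult.left_commute)
    also have "\<dots> = (\<Sum>n<Suc N. (exp y - Tp (Suc n) y) * (1 - (- x) ^ n))"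
      by (subst sum.lessThan_Suc_shift) simp
    finally show ?thesis by (simp add: lessThan_Suc_atMost)
  qed
  have D: "(1 + x) ^ 2 * (gN y N x - ff y x)
      = (1 + x) * (real (Suc N) * R + y * (Tp N y - exp y)) + (Tp (Suc N) (- (x * y)) - exp (- (x * y))) + (- x) ^ (Suc N) * R"
  proof -
    have "(1 + x) ^ 2 * gN y N x = (1 + x) * ((1 + x) * gN y N x)" by (simp add: power2_eq_square)
    also have "\<dots> = (1 + x) * (real (Suc N) * R + y * Tp N y) - exp y
      + Tp (Suc N) (- (x * y)) + (- x) ^ (Suc N) * R"
      unfolding sum1 fin_id R_def by simp
    finally have g: "(1 + x) ^ 2 * gN y N x = \<dots>" .
    have f: "(1 + x) ^ 2 * ff y x = (1 + x) * (y * exp y) - (exp y - exp (- (x * y)))"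
    proof -
      have "(1 + x) ^ 2 * (y * exp y / (1 + x)) = (1 + x) * (y * exp y)"
        using x1 by (simp add: power2_eq_square)
      moreover have "(1 + x) ^ 2 * ((exp y - exp (- (x * y))) / (1 + x) ^ 2) = exp y - exp (- (x * y))"
        using x1 by simp
      ultimately show ?thesis unfolding ff_def right_diff_distrib by simp
    qed
    show ?thesis unfolding right_diff_distrib[of "(1 + x) ^ 2"] g f by (simp add: algebra_simps)
  qed
  have b1: "\<bar>R\<bar> \<le> A * cc y (Suc N)"
    using Tp_bound[of y "\<bar>y\<bar>" "Suc N"] unfolding R_def A_def cc_def by simp
  have b2: "\<bar>Tp N y - exp y\<bar> \<le> A * cc y N"
    using Tp_bound[of y "\<bar>y\<bar>" N] unfolding A_def cc_def by (simp add: abs_minus_commute)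
  have b3: "\<bar>Tp (Suc N) (- (x * y)) - exp (- (x * y))\<bar> \<le> A * cc y (Suc N)"
  proof -
    have "\<bar>- (x * y)\<bar> \<le> \<bar>y\<bar>" using x by (simp add: abs_mult mult_left_le_one_le)
    from Tp_bound[OF this, of "Suc N"] show ?thesis unfolding A_def cc_def by (simp add: abs_minus_commute)
  qed
  have b4: "\<bar>(- x) ^ (Suc N) * R\<bar> \<le> A * cc y (Suc N)"
  proof -
    have "\<bar>(- x) ^ (Suc N)\<bar> = \<bar>x\<bar> ^ Suc N" by (simp only: power_abs abs_minus_cancel)
    also have "\<dots> \<le> 1" using x by (intro power_le_one) auto
    finally have "\<bar>(- x) ^ (Suc N)\<bar> \<le> 1" .
    then have "\<bar>(- x) ^ (Suc N) * R\<bar> \<le> 1 * \<bar>R\<bar>" unfolding abs_mult by (intro mult_right_mono) auto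
    then show ?thesis using b1 by simp
  qed
  have Apos: "0 \<le> A" "0 \<le> cc y N" "0 \<le> cc y (Suc N)" unfolding A_def cc_def by auto
  have b5: "\<bar>real (Suc N) * R + y * (Tp N y - exp y)\<bar> \<le> 2 * A * \<bar>y\<bar> * cc y N"
  proof -
    have "\<bar>real (Suc N) * R\<bar> \<le> real (Suc N) * (A * cc y (Suc N))"
      unfolding abs_mult abs_of_nat using b1 by (intro mult_left_mono) auto
    also have "\<dots> = A * \<bar>y\<bar> * cc y N" using cc_Suc[of N y] by (simp add: algebra_simps)
    finally have "\<bar>real (Suc N) * R\<bar> \<le> A * \<bar>y\<bar> * cc y N" .
    moreover have "\<bar>y * (Tp N y - exp y)\<bar> \<le> \<bar>y\<bar> * (A * cc y N)"
      unfolding abs_mult using b2 by (intro mult_left_mono) auto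
    ultimately show ?thesis by (simp add: algebra_simps)
  qed
  have b6: "\<bar>(1 + x) * (real (Suc N) * R + y * (Tp N y - exp y))\<bar> \<le> 2 * (2 * A * \<bar>y\<bar> * cc y N)"
    unfolding abs_mult using b5 x1 by (intro mult_mono) auto
  have "\<bar>(1 + x) ^ 2 * (gN y N x - ff y x)\<bar> \<le> eps y N"
    unfolding D eps_def A_def[symmetric] using b3 b4 b6 by linarith
  moreover have "\<bar>gN y N x - ff y x\<bar> \<le> \<bar>(1 + x) ^ 2 * (gN y N x - ff y x)\<bar>"
  proof -
    have "1 \<le> (1 + x) ^ 2" using x1 by (simp add: one_le_power)
    then have "1 * \<bar>gN y N x - ff y x\<bar> \<le> (1 + x) ^ 2 * \<bar>gN y N x - ff y x\<bar>"
      by (intro mult_right_mono) auto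
    then show ?thesis by (simp add: abs_mult)
  qed
  ultimately show ?thesis by linarith
qed

lemma cc_lim: "cc y \<longlonglongrightarrow> 0"
proof -
  have "summable (\<lambda>n. inverse (fact n) * \<bar>y\<bar> ^ n)" by (rule summable_exp)
  then have "(\<lambda>n. inverse (fact n) * \<bar>y\<bar> ^ n) \<longlonglongrightarrow> 0" by (rule summable_LIMSEQ_zero)
  then show ?thesis unfolding cc_def by (simp add: divide_inverse mult.commute)
qed

lemma eps_lim: "eps y \<longlonglongrightarrow> 0"
proof -
  have "(\<lambda>N. 4 * exp \<bar>y\<bar> * \<bar>y\<bar> * cc y N + 2 * exp \<bar>y\<bar> * cc y (Suc N)) \<longlonglongrightarrow>
        4 * exp \<bar>y\<bar> * \<bar>y\<bar> * 0 + 2 * exp \<bar>y\<bar> * 0"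
    by (intro tendsto_intros cc_lim LIMSEQ_Suc)
  then show ?thesis unfolding eps_def[abs_def] by simp
qed

theorem mainTheorem8:
  fixes y :: real
  shows "(\<lambda>n. skew_harmonic (Suc n) * (exp y - (\<Sum>k\<le>Suc n. y ^ k / fact k)))
           sums (y * exp y * (Ein (2 * y) - Ein y) - cosh y + 1)"
proof -
  define L where "L = y * exp y * (Ein (2 * y) - Ein y) - cosh y + 1"
  define a where "a = (\<lambda>n. skew_harmonic (Suc n) * (exp y - (\<Sum>k\<le>Suc n. y ^ k / fact k)))"
  have a_alt: "a n = (exp y - Tp (Suc (Suc n)) y) * skew_harmonic (Suc n)" for n
    unfolding a_def Tp_def by (simp add: lessThan_Suc_atMost mult.commute)
  have hasP: "(gN y N has_integral (\<Sum>n<N. a n)) {0..1}" for N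
    unfolding gN_def a_alt
    by (rule has_integral_sum[OF finite_lessThan], rule has_integral_mult_right[OF hh_integral])
  have bound: "norm ((\<Sum>n<N. a n) - L) \<le> eps y N" for N
  proof -
    have "((\<lambda>x. gN y N x - ff y x) has_integral ((\<Sum>n<N. a n) - L)) {0..1}"
      unfolding L_def by (rule has_integral_diff[OF hasP ff_integral])
    moreover have "0 \<le> eps y N" unfolding eps_def cc_def by auto
    ultimately show ?thesis
      using has_integral_bound_real[where S="{}" and B="eps y N" and f="\<lambda>x. gN y N x - ff y x"
          and i="(\<Sum>n<N. a n) - L" and a=0 and b=1] gN_bound by simp
  qed
  have "(\<lambda>N. (\<Sum>n<N. a n) - L) \<longlonglongrightarrow> 0"
    by (rule Lim_null_comparison[OF _ eps_lim[of y]]) (rule always_eventually, use bound in simp)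
  then have "(\<lambda>N. (\<Sum>n<N. a n)) \<longlonglongrightarrow> L"
    by (simp add: LIM_zero_iff)
  then show ?thesis unfolding sums_def a_def L_def .
qed

end
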